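(* Let $$f(x)=c_0+c_1x^{e_1}+c_2x^{e_2}+\cdots+c_tx^{e_t}\in\mathbb{Q}[x]$$ with $c_1,\dots,c_t\in\mathbb{Q}\setminus\{0\}$ and distinct positive integers $e_1,\dots,e_t$. Let $B_T,B_H,B_N\in\mathbb{N}$ satisfy $t\le B_T$, $\mathrm{size}(c_i)\le B_H$ for $0\le i\le t$, and $\log_2\deg f\le B_N$. Then there exist $C_1,C_2\in\mathbb{N}$ with $\log_2 C_1\le 2B_HB_T$ and $\log_2 C_2\le \tfrac12 B_NB_T(B_T-1)$ such that for every prime $p$ with $p\nmid C_1$ and $(p-1)\nmid C_2$, $\tau(f^{(p)})$ is maximal, i.e., $\tau(f^{(p)})=t$.
   Context: For $q\in\mathbb{Q}$ written as $q=a/b$ with $a\in\mathbb{Z}$, $b\in\mathbb{N}$, $\gcd(a,b)=1$, $\mathrm{size}(q)=\lceil\log_2(|a|+1)\rceil+\lceil\log_2(b+1)\rceil+1$. For a prime $p$ and $f\in\mathbb{Q}[x]$, $f^{(p)}\in\mathbb{Z}_p[x]$ denotes the unique polynomial of degree less than $p$ which is congruent to $f$ modulo $x^p-x$ and whose coefficients are reduced modulo $p$. For a univariate polynomial $g$, $\tau(g)$ is the number of distinct non-zero, non-constant terms of $g$. *)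

theory Defs
  imports Complex_Main "HOL-Computational_Algebra.Polynomial" "HOL-Number_Theory.Cong"
begin

definition rat_size :: "rat \<Rightarrow> int" where
  "rat_size q = (case quotient_of q of (a, b) \<Rightarrow>
     \<lceil>log 2 (real_of_int (\<bar>a\<bar> + 1))\<rceil> + \<lceil>log 2 (real_of_int (b + 1))\<rceil> + 1)"

text \<open>reduction of a rational a/b modulo p, as a representative in {0..<p};
  meaningful when p does not divide b\<close>
definition rat_mod :: "nat \<Rightarrow> rat \<Rightarrow> int" where
  "rat_mod p q = (case quotient_of q of (a, b) \<Rightarrow>
     (THE r. 0 \<le> r \<and> r < int p \<and> [r * b = a] (mod int p)))"

text \<open>congruence of integer polynomials modulo the ideal (p, m) of Z[x],
  i.e. congruence modulo m in Z_p[x]\<close>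
definition poly_cong_mod :: "nat \<Rightarrow> int poly \<Rightarrow> int poly \<Rightarrow> int poly \<Rightarrow> bool" where
  "poly_cong_mod p m g h = (\<exists>k :: int poly. \<forall>i. int p dvd coeff (g - h - k * m) i)"

text \<open>f^(p): the unique polynomial of degree < p with coefficients reduced mod p
  that is congruent to f modulo x^p - x in Z_p[x]\<close>
definition reduce_p :: "nat \<Rightarrow> rat poly \<Rightarrow> int poly" where
  "reduce_p p f = (THE g. degree g < p \<and> (\<forall>i. 0 \<le> coeff g i \<and> coeff g i < int p) \<and>
      poly_cong_mod p (monom 1 p - monom 1 1) g (map_poly (rat_mod p) f))"

definition tau :: "'a::zero poly \<Rightarrow> nat" where
  "tau g = card {i. 1 \<le> i \<and> coeff g i \<noteq> 0}"

end

theory Submission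
  imports Defs
begin


lemma rat_mod_0: "0 < p \<Longrightarrow> rat_mod p 0 = 0"
proof -
  assume p0: "0 < p"
  have "r = 0" if "0 \<le> r" "r < int p" "int p dvd r" for r :: int
  proof (rule ccontr)
    assume "r \<noteq> 0"
    hence "\<bar>int p\<bar> \<le> \<bar>r\<bar>" using dvd_imp_le_int that(3) by blast
    thus False using that by simp
  qed
  thus ?thesis unfolding rat_mod_def using p0
    by (simp, intro the_equality) (auto simp: cong_0_iff)
qed

lemma rat_mod_props:
  fixes p :: nat
  assumes pr: "prime p" and q: "quotient_of q = (a, b)" and nd: "\<not> int p dvd b"
  shows "0 \<le> rat_mod p q \<and> rat_mod p q < int p \<and> [rat_mod p q * b = a] (mod int p)
         \<and> (rat_mod p q = 0 \<longrightarrow> int p dvd a)"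
proof -
  have pri: "prime (int p)" using pr by simp
  have cop: "coprime b (int p)" using nd pri
    by (metis coprime_commute prime_imp_coprime)
  obtain x where x: "[b * x = 1] (mod int p)" using cong_solve_coprime_int[OF cop] by blast
  define r where "r = (a * x) mod int p"
  have pp: "int p > 0" using pr prime_gt_0_nat by auto
  have P: "0 \<le> r \<and> r < int p \<and> [r * b = a] (mod int p)"
  proof -
    have "[r * b = a * x * b] (mod int p)" unfolding r_def by (simp add: cong_mult cong_mod_left)
    moreover have "[a * x * b = a * 1] (mod int p)"
      using cong_mult[OF cong_refl[of a] x] by (simp add: mult.commute mult.left_commute)
    ultimately show ?thesis unfolding r_def using pp by (auto intro: cong_trans)
  qed
  have U: "r' = r" if "0 \<le> r' \<and> r' < int p \<and> [r' * b = a] (mod int p)" for r'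
  proof -
    have "[r' * b = r * b] (mod int p)" using that P by (meson cong_sym cong_trans)
    hence "int p dvd (r' - r) * b" by (simp add: cong_iff_dvd_diff left_diff_distrib)
    hence "int p dvd (r' - r)" using nd pri by (meson prime_dvd_mult_iff)
    show ?thesis
    proof (rule ccontr)
      assume "r' \<noteq> r"
      hence "\<bar>int p\<bar> \<le> \<bar>r' - r\<bar>" using dvd_imp_le_int[OF _ \<open>int p dvd (r' - r)\<close>] by simp
      thus False using that P by linarith
    qed
  qed
  have e: "rat_mod p q = r" unfolding rat_mod_def q prod.case
    by (rule the_equality) (use P U in blast)+
  have "int p dvd a" if "r = 0"
  proof -
    have "[0 = a] (mod int p)" using P that by simp
    hence "[a = 0] (mod int p)" by (rule cong_sym)
    thus ?thesis by (simp add: cong_0_iff)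
  qed
  thus ?thesis using P e by blast
qed



lemma coeff_mult_m:
  "coeff (k * (monom 1 p - monom 1 1)) i =
     (if p \<le> i then coeff k (i - p) else 0) - (if 1 \<le> i then coeff k (i - 1) else (0::int))"
proof -
  have "k * (monom 1 p - monom 1 1) = monom 1 p * k - monom 1 1 * k" by (simp add: right_diff_distrib mult.commute)
  hence "coeff (k * (monom 1 p - monom 1 1)) i = coeff (monom 1 p * k) i - coeff (monom 1 1 * k) i"
    by (simp only: coeff_diff)
  also have "\<dots> = (if p \<le> i then coeff k (i - p) else 0) - (if 1 \<le> i then coeff k (i - 1) else 0)"
    unfolding coeff_monom_mult by (simp add: not_less)
  finally show ?thesis .
qed

lemma cong_unique:
  fixes p :: nat
  assumes p2: "2 \<le> p"
    and c1: "poly_cong_mod p (monom 1 p - monom 1 1) g1 h"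
    and c2: "poly_cong_mod p (monom 1 p - monom 1 1) g2 h"
    and d1: "degree g1 < p" and d2: "degree g2 < p"
    and r1: "\<forall>i. 0 \<le> coeff g1 i \<and> coeff g1 i < int p"
    and r2: "\<forall>i. 0 \<le> coeff g2 i \<and> coeff g2 i < int p"
  shows "g1 = g2"
proof -
  define m :: "int poly" where "m = monom 1 p - monom 1 1"
  obtain k1 where k1: "\<forall>i. int p dvd coeff (g1 - h - k1 * m) i" using c1 unfolding poly_cong_mod_def m_def by blast
  obtain k2 where k2: "\<forall>i. int p dvd coeff (g2 - h - k2 * m) i" using c2 unfolding poly_cong_mod_def m_def by blast
  define k where "k = k1 - k2"
  define \<delta> where "\<delta> = g1 - g2"
  have eq: "g1 - g2 - k * m = (g1 - h - k1 * m) - (g2 - h - k2 * m)"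
    unfolding k_def by (simp add: algebra_simps)
  have D: "int p dvd coeff (\<delta> - k * m) i" for i
  proof -
    have "coeff (\<delta> - k * m) i = coeff (g1 - h - k1 * m) i - coeff (g2 - h - k2 * m) i"
      unfolding \<delta>_def eq by (rule coeff_diff)
    thus ?thesis using k1 k2 by (simp only: dvd_diff)
  qed
  have dd: "degree \<delta> < p"
  proof -
    have "degree (g1 - g2) \<le> max (degree g1) (degree g2)" by (rule degree_diff_le) auto
    thus ?thesis unfolding \<delta>_def using d1 d2 by simp
  qed
  have K: "int p dvd coeff k j" for j
  proof (rule ccontr)
    assume nj: "\<not> int p dvd coeff k j"
    define S where "S = {j. \<not> int p dvd coeff k j}"
    have fS: "finite S"
    proof -
      have "S \<subseteq> {..degree k}" unfolding S_def
        by (auto intro: ccontr simp: coeff_eq_0 not_le)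
      thus ?thesis using finite_subset by blast
    qed
    have jS: "j \<in> S" using nj S_def by simp
    define J where "J = Max S"
    have JS: "J \<in> S" unfolding J_def using fS jS Max_in by blast
    have big: "int p dvd coeff k (J + p - 1)"
    proof (rule ccontr)
      assume "\<not> int p dvd coeff k (J + p - 1)"
      hence "J + p - 1 \<in> S" unfolding S_def by simp
      hence "J + p - 1 \<le> J" unfolding J_def using fS by simp
      thus False using p2 by simp
    qed
    have c0: "coeff \<delta> (J + p) = 0" using dd by (simp add: coeff_eq_0)
    have cm: "coeff (k * m) (J + p) = coeff k J - coeff k (J + p - 1)"
      unfolding m_def coeff_mult_m using p2 by simp
    have "coeff (\<delta> - k * m) (J + p) = coeff \<delta> (J + p) - coeff (k * m) (J + p)" by (rule coeff_diff)
    hence "coeff (\<delta> - k * m) (J + p) = - (coeff k J - coeff k (J + p - 1))" using c0 cm by simp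
    hence h: "int p dvd coeff k (J + p - 1) - coeff k J" using D[of "J + p"] by simp
    have "int p dvd coeff k (J + p - 1) - (coeff k (J + p - 1) - coeff k J)" using dvd_diff[OF big h] .
    hence "int p dvd coeff k J" by simp
    thus False using JS S_def by simp
  qed
  have KM: "int p dvd coeff (k * m) i" for i
  proof -
    have a1: "int p dvd (if p \<le> i then coeff k (i - p) else 0)" using K by simp
    have a2: "int p dvd (if 1 \<le> i then coeff k (i - 1) else 0)" using K by simp
    show ?thesis unfolding m_def coeff_mult_m using dvd_diff[OF a1 a2] .
  qed
  have Dl: "int p dvd coeff \<delta> i" for i
  proof -
    have "coeff \<delta> i = coeff (\<delta> - k * m) i + coeff (k * m) i" by simp
    thus ?thesis using dvd_add[OF D[of i] KM[of i]] by simp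
  qed
  have "coeff g1 i = coeff g2 i" for i
  proof (rule ccontr)
    assume ne: "coeff g1 i \<noteq> coeff g2 i"
    have "int p dvd coeff g1 i - coeff g2 i" using Dl[of i] unfolding \<delta>_def by simp
    hence "\<bar>int p\<bar> \<le> \<bar>coeff g1 i - coeff g2 i\<bar>" using ne dvd_imp_le_int[of "coeff g1 i - coeff g2 i" "int p"] by simp
    thus False using r1 r2 by (smt (verit))
  qed
  thus ?thesis by (rule poly_eqI)
qed

lemma cong_add:
  assumes "poly_cong_mod p m g1 h1" "poly_cong_mod p m g2 h2"
  shows "poly_cong_mod p m (g1 + g2) (h1 + h2)"
proof -
  obtain k1 where k1: "\<forall>i. int p dvd coeff (g1 - h1 - k1 * m) i" using assms(1) unfolding poly_cong_mod_def by blast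
  obtain k2 where k2: "\<forall>i. int p dvd coeff (g2 - h2 - k2 * m) i" using assms(2) unfolding poly_cong_mod_def by blast
  have EQ: "g1 + g2 - (h1 + h2) - (k1 + k2) * m = (g1 - h1 - k1 * m) + (g2 - h2 - k2 * m)"
    by (simp add: algebra_simps)
  have "\<forall>i. int p dvd coeff (g1 + g2 - (h1 + h2) - (k1 + k2) * m) i"
    unfolding EQ coeff_add using k1 k2 by (blast intro: dvd_add)
  thus ?thesis unfolding poly_cong_mod_def by blast
qed

lemma cong_sum:
  assumes "\<And>i. i \<in> S \<Longrightarrow> poly_cong_mod p m (g i) (h i)"
  shows "poly_cong_mod p m (\<Sum>i\<in>S. g i) (\<Sum>i\<in>S. h i)"
  using assms
proof (induction S rule: infinite_finite_induct)
  case (infinite A) thus ?case unfolding poly_cong_mod_def by (auto intro: exI[of _ 0])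
next
  case empty thus ?case unfolding poly_cong_mod_def by (auto intro: exI[of _ 0])
next
  case (insert x F) thus ?case by (simp add: cong_add)
qed

lemma cong_const:
  "poly_cong_mod p m [:a mod int p:] [:a:]"
  unfolding poly_cong_mod_def
  by (rule exI[of _ 0]) (auto simp: coeff_pCons split: nat.splits intro: iffD1[OF mod_eq_dvd_iff] )

lemma dvd_xpow:
  fixes p e :: nat
  assumes p2: "2 \<le> p" and e: "1 \<le> e"
  shows "(monom 1 p - monom 1 1 :: int poly) dvd monom 1 e - monom 1 ((e - 1) mod (p - 1) + 1)"
proof -
  define e' where "e' = (e - 1) mod (p - 1) + 1"
  define q where "q = (e - 1) div (p - 1)"
  have ee: "e = e' + (p - 1) * q" unfolding e'_def q_def using e by simp
  have e1: "e' \<ge> 1" unfolding e'_def by simp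
  have y: "(monom 1 (p - 1) - 1 :: int poly) dvd monom 1 (p - 1) ^ q - 1 ^ q"
    unfolding power_diff_sumr2 by simp
  have "monom 1 e - monom 1 e' = (monom 1 (e' - 1) * monom 1 1 :: int poly) * (monom 1 (p - 1) ^ q - 1)"
    using e1 by (simp add: ee monom_power right_diff_distrib mult_monom)
  moreover have "(monom 1 p - monom 1 1 :: int poly) = monom 1 1 * (monom 1 (p - 1) - 1)"
    using p2 by (simp add: right_diff_distrib mult_monom)
  moreover have "monom 1 1 * (monom 1 (p - 1) - 1) dvd (monom 1 (e' - 1) * monom 1 1 :: int poly) * (monom 1 (p - 1) ^ q - 1)"
  proof -
    have "monom 1 1 * (monom 1 (p - 1) - 1) dvd monom 1 1 * (monom 1 (p - 1) ^ q - (1::int poly))"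
      using y by (simp add: mult_dvd_mono)
    thus ?thesis by (metis dvd_mult mult.assoc mult.commute)
  qed
  ultimately show ?thesis unfolding e'_def[symmetric] by simp
qed

lemma cong_monom:
  fixes p e :: nat
  assumes p2: "2 \<le> p" and e: "1 \<le> e"
  shows "poly_cong_mod p (monom 1 p - monom 1 1) (monom a ((e - 1) mod (p - 1) + 1)) (monom a e)"
proof -
  obtain k where k: "monom 1 e - monom 1 ((e - 1) mod (p - 1) + 1) = (monom 1 p - monom 1 1 :: int poly) * k"
    using dvd_xpow[OF p2 e] by (elim dvdE)
  define e' where "e' = (e - 1) mod (p - 1) + 1"
  define M :: "int poly" where "M = monom 1 p - monom 1 1"
  have h: "monom a e - monom a e' = smult a k * M"
    using arg_cong[OF k[folded e'_def M_def], of "smult a"] by (simp add: smult_diff_right smult_monom mult.commute)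
  have "monom a e' - monom a e - (- smult a k) * M = smult a k * M - (monom a e - monom a e')"
    by (simp add: algebra_simps)
  also have "\<dots> = 0" using h by simp
  finally show ?thesis unfolding poly_cong_mod_def e'_def[symmetric] M_def[symmetric]
    by (intro exI[of _ "- smult a k"]) simp
qed




lemma coeff_G_pos:
  assumes "finite S" "inj_on e S" "j \<in> S" "0 < e j"
  shows "coeff ([:a0:] + (\<Sum>i\<in>S. monom (a i) (e i))) (e j) = a j"
proof -
  have "(\<Sum>i\<in>S. coeff (monom (a i) (e i)) (e j)) = (\<Sum>i\<in>S. if i = j then a i else 0)"
    using assms by (intro sum.cong) (auto simp: coeff_monom dest: inj_onD)
  thus ?thesis using assms by (simp add: coeff_sum coeff_pCons split: nat.splits)
qed

lemma coeff_G_out: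
  assumes "n \<notin> e ` S" "n \<noteq> 0"
  shows "coeff ([:a0:] + (\<Sum>i\<in>S. monom (a i) (e i))) n = 0"
proof -
  have "(\<Sum>i\<in>S. coeff (monom (a i) (e i)) n) = 0"
    using assms by (intro sum.neutral) (auto simp: coeff_monom)
  thus ?thesis using assms by (simp add: coeff_sum coeff_pCons split: nat.splits)
qed

lemma coeff_G_0:
  assumes "\<forall>i\<in>S. 0 < e i"
  shows "coeff ([:a0:] + (\<Sum>i\<in>S. monom (a i) (e i))) 0 = a0"
proof -
  have "(\<Sum>i\<in>S. coeff (monom (a i) (e i)) 0) = 0"
    using assms by (intro sum.neutral) (auto simp: coeff_monom)
  thus ?thesis using assms by (simp add: coeff_sum)
qed

lemma gauss2: "2 * (\<Sum>i\<in>{1..t}. t - i) = t * (t - 1::nat)"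
proof (induction t)
  case 0 thus ?case by simp
next
  case (Suc t)
  have "(\<Sum>i\<in>{1..Suc t}. Suc t - i) = (\<Sum>i\<in>{1..t}. Suc t - i)" by (simp add: sum.atLeast_Suc_atMost_Suc_shift)
  also have "\<dots> = (\<Sum>i\<in>{1..t}. (t - i) + 1)" by (intro sum.cong) auto
  also have "\<dots> = (\<Sum>i\<in>{1..t}. t - i) + t" unfolding sum.distrib by simp
  finally show ?case using Suc by (cases t) (auto simp: algebra_simps)
qed




theorem mainTheorem3:
  fixes t :: nat and c :: "nat \<Rightarrow> rat" and e :: "nat \<Rightarrow> nat" and f :: "rat poly"
    and B_T B_H B_N :: nat
  assumes f_def: "f = [:c 0:] + (\<Sum>i = 1..t. monom (c i) (e i))"
    and c_nz: "\<forall>i \<in> {1..t}. c i \<noteq> 0"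
    and e_pos: "\<forall>i \<in> {1..t}. 0 < e i"
    and e_inj: "inj_on e {1..t}"
    and BT: "t \<le> B_T"
    and BH: "\<forall>i \<in> {0..t}. rat_size (c i) \<le> int B_H"
    and BN: "log 2 (real (degree f)) \<le> real B_N"
  shows "\<exists>C1 C2 :: nat. 0 < C1 \<and> 0 < C2 \<and>
           log 2 (real C1) \<le> 2 * real B_H * real B_T \<and>
           log 2 (real C2) \<le> real B_N * real B_T * (real B_T - 1) / 2 \<and>
           (\<forall>p. prime p \<and> \<not> p dvd C1 \<and> \<not> (p - 1) dvd C2 \<longrightarrow> tau (reduce_p p f) = t)"
proof -
  define S where "S = {1..t}"
  have fS: "finite S" and cS: "card S = t" unfolding S_def by auto
  define a where "a i = fst (quotient_of (c i))" for i
  define b where "b i = snd (quotient_of (c i))" for i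
  have q: "quotient_of (c i) = (a i, b i)" for i unfolding a_def b_def by simp
  have bpos: "b i > 0" for i using quotient_of_denom_pos[OF q] .
  have anz: "a i \<noteq> 0" if "i \<in> S" for i
    using quotient_of_div[OF q[of i]] c_nz that unfolding S_def by auto
  define C1 where "C1 = (\<Prod>i\<in>S. nat (\<bar>a i\<bar> * b i))"
  define d where "d i j = (if e i \<le> e j then e j - e i else e i - e j)" for i j
  define C2 where "C2 = (\<Prod>i\<in>S. \<Prod>j\<in>{i<..t}. d i j)"
  have C1pos: "0 < C1" unfolding C1_def using anz bpos
    by (intro prod_pos) (auto simp: zero_less_mult_iff)
  have dpos: "0 < d i j" if "i \<in> S" "j \<in> {i<..t}" for i j
  proof -
    have "e i \<noteq> e j" using e_inj that unfolding S_def by (auto dest: inj_onD)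
    thus ?thesis unfolding d_def by auto
  qed
  have C2pos: "0 < C2" unfolding C2_def using dpos by (intro prod_pos) auto
  have coeff_f: "coeff f (e i) = c i" if "i \<in> S" for i
    unfolding f_def using that e_inj e_pos unfolding S_def
    by (intro coeff_G_pos) auto
  have e_le: "e i \<le> degree f" if "i \<in> S" for i
    using coeff_f[OF that] c_nz that unfolding S_def by (intro le_degree) auto
  have ab_le: "real (nat (\<bar>a i\<bar> * b i)) \<le> 2 ^ B_H" if "i \<in> S" for i
  proof -
    have rs: "rat_size (c i) \<le> int B_H" using BH that unfolding S_def by auto
    define A where "A = \<lceil>log 2 (real_of_int (\<bar>a i\<bar> + 1))\<rceil>"
    define B where "B = \<lceil>log 2 (real_of_int (b i + 1))\<rceil>"
    have AB: "A + B + 1 \<le> int B_H" using rs unfolding rat_size_def q A_def B_def by simp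
    have x1: "real_of_int (\<bar>a i\<bar> + 1) \<le> 2 powr A"
    proof -
      have "real_of_int (\<bar>a i\<bar> + 1) = 2 powr (log 2 (real_of_int (\<bar>a i\<bar> + 1)))" by simp
      also have "\<dots> \<le> 2 powr A" unfolding A_def by (intro powr_mono) auto
      finally show ?thesis .
    qed
    have x2: "real_of_int (b i + 1) \<le> 2 powr B"
    proof -
      have "real_of_int (b i + 1) = 2 powr (log 2 (real_of_int (b i + 1)))" using bpos[of i] by simp
      also have "\<dots> \<le> 2 powr B" unfolding B_def by (intro powr_mono) auto
      finally show ?thesis .
    qed
    have "real (nat (\<bar>a i\<bar> * b i)) = real_of_int (\<bar>a i\<bar>) * real_of_int (b i)"
      using bpos[of i] by simp
    also have "\<dots> \<le> real_of_int (\<bar>a i\<bar> + 1) * real_of_int (b i + 1)"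
      using bpos[of i] by (intro mult_mono) auto
    also have "\<dots> \<le> 2 powr A * 2 powr B" using x1 x2 bpos[of i] by (intro mult_mono) auto
    also have "\<dots> = 2 powr (A + B)" by (simp add: powr_add)
    also have "\<dots> \<le> 2 powr (real B_H)" using AB by (intro powr_mono) auto
    also have "\<dots> = 2 ^ B_H" by (simp add: powr_realpow)
    finally show ?thesis .
  qed
  have logC1: "log 2 (real C1) \<le> 2 * real B_H * real B_T"
  proof -
    have "real C1 = (\<Prod>i\<in>S. real (nat (\<bar>a i\<bar> * b i)))" unfolding C1_def by simp
    also have "\<dots> \<le> (\<Prod>i\<in>S. 2 ^ B_H)" using ab_le by (intro prod_mono) auto
    also have "\<dots> = 2 ^ (B_H * t)" using cS by (simp add: power_mult mult.commute)
    finally have "log 2 (real C1) \<le> log 2 (2 ^ (B_H * t))" using C1pos by (intro log_mono) auto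
    also have "\<dots> = real B_H * real t" by (simp add: log_nat_power)
    also have "\<dots> \<le> 2 * real B_H * real B_T" using BT by (simp add: mult_mono)
    finally show ?thesis .
  qed
  have logC2: "log 2 (real C2) \<le> real B_N * real B_T * (real B_T - 1) / 2"
  proof (cases "t = 0")
    case True
    hence "C2 = 1" unfolding C2_def S_def by simp
    moreover have "0 \<le> real B_N * real B_T * (real B_T - 1) / 2"
      by (cases B_T) auto
    ultimately show ?thesis by simp
  next
    case False
    define D where "D = degree f"
    have D1: "1 \<le> D" unfolding D_def using e_le[of 1] e_pos False unfolding S_def by force
    define N where "N = (\<Sum>i\<in>S. t - i)"
    have dle: "d i j \<le> D" if "i \<in> S" "j \<in> {i<..t}" for i j
      using e_le[of i] e_le[of j] that unfolding d_def D_def S_def by auto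
    have "real C2 = (\<Prod>i\<in>S. \<Prod>j\<in>{i<..t}. real (d i j))" unfolding C2_def by simp
    also have "\<dots> \<le> (\<Prod>i\<in>S. \<Prod>j\<in>{i<..t}. real D)"
    proof (rule prod_mono)
      fix i assume iS: "i \<in> S"
      have "(\<Prod>j\<in>{i<..t}. real (d i j)) \<le> (\<Prod>j\<in>{i<..t}. real D)"
        by (rule prod_mono) (use dle iS in auto)
      thus "0 \<le> (\<Prod>j\<in>{i<..t}. real (d i j)) \<and> (\<Prod>j\<in>{i<..t}. real (d i j)) \<le> (\<Prod>j\<in>{i<..t}. real D)"
        by (simp add: prod_nonneg)
    qed
    also have "\<dots> = (\<Prod>i\<in>S. real D ^ (t - i))" by simp
    also have "\<dots> = real D ^ N" unfolding N_def by (simp add: power_sum)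
    finally have "log 2 (real C2) \<le> log 2 (real D ^ N)" using C2pos by (intro log_mono) auto
    also have "\<dots> = real N * log 2 (real D)" using D1 by (simp add: log_nat_power)
    also have "\<dots> \<le> real N * real B_N" using BN unfolding D_def by (intro mult_left_mono) auto
    also have "\<dots> = real B_N * (real t * (real t - 1)) / 2"
    proof -
      have "2 * N = t * (t - 1)" unfolding N_def S_def by (rule gauss2)
      hence "real (2 * N) = real (t * (t - 1))" by (simp only:)
      hence "2 * real N = real t * (real t - 1)" using False by (simp add: of_nat_diff)
      thus ?thesis by simp
    qed
    also have "\<dots> \<le> real B_N * (real B_T * (real B_T - 1)) / 2"
    proof -
      have "real t * (real t - 1) \<le> real B_T * (real B_T - 1)"
        using BT False by (intro mult_mono) auto
      thus ?thesis by (intro divide_right_mono mult_left_mono) auto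
    qed
    finally show ?thesis by (simp add: mult.assoc)
  qed
  have main: "tau (reduce_p p f) = t" if pr: "prime p" and nC1: "\<not> p dvd C1" and nC2: "\<not> (p - 1) dvd C2" for p
  proof -
    have p2: "2 \<le> p" using pr prime_ge_2_nat by blast
    have p0: "0 < p" using p2 by simp
    have ndiv: "\<not> int p dvd a i \<and> \<not> int p dvd b i" if "i \<in> S" for i
    proof -
      have "p dvd nat (\<bar>a i\<bar> * b i)" if "int p dvd a i \<or> int p dvd b i"
      proof -
        have "int p dvd \<bar>a i\<bar> * b i" using that by auto
        hence "int p dvd int (nat (\<bar>a i\<bar> * b i))" using bpos[of i] by simp
        thus ?thesis by (simp only: int_dvd_int_iff)
      qed
      moreover have "nat (\<bar>a i\<bar> * b i) dvd C1" unfolding C1_def using fS that by (rule dvd_prodI)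
      ultimately show ?thesis using nC1 dvd_trans by blast
    qed
    define r where "r i = rat_mod p (c i)" for i
    have rprop: "0 \<le> r i \<and> r i < int p \<and> r i \<noteq> 0" if "i \<in> S" for i
      using rat_mod_props[OF pr q[of i]] ndiv[OF that] unfolding r_def by auto
    define red where "red n = (n - 1) mod (p - 1) + 1" for n
    have red_le: "red n \<le> p - 1" for n
    proof -
      have "(n - 1) mod (p - 1) < p - 1" using p2 by simp
      thus ?thesis unfolding red_def by simp
    qed
    have red_pos: "0 < red n" for n unfolding red_def by simp
    have dvdC2: "d i j dvd C2" if "i \<in> S" "j \<in> S" "i < j" for i j
    proof -
      have "d i j dvd (\<Prod>j\<in>{i<..t}. d i j)" using that unfolding S_def by (intro dvd_prodI) auto
      also have "\<dots> dvd C2" unfolding C2_def using fS that(1) by (rule dvd_prodI)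
      finally show ?thesis .
    qed
    have dsym: "d i j = d j i" for i j unfolding d_def by auto
    have pdvd: "(p - 1) dvd d i j" if "red (e i) = red (e j)" "i \<in> S" "j \<in> S" for i j
    proof -
      have m: "(e i - 1) mod (p - 1) = (e j - 1) mod (p - 1)" using that(1) unfolding red_def by simp
      show ?thesis
      proof (cases "e i \<le> e j")
        case True
        hence "(p - 1) dvd (e j - 1) - (e i - 1)" using m mod_eq_dvd_iff_nat[of "e i - 1" "e j - 1" "p - 1"] by auto
        moreover have "(e j - 1) - (e i - 1) = d i j" using True e_pos that unfolding d_def S_def by auto
        ultimately show ?thesis by simp
      next
        case False
        hence "(p - 1) dvd (e i - 1) - (e j - 1)" using m mod_eq_dvd_iff_nat[of "e j - 1" "e i - 1" "p - 1"] by auto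
        moreover have "(e i - 1) - (e j - 1) = d i j" using False e_pos that unfolding d_def S_def by auto
        ultimately show ?thesis by simp
      qed
    qed
    have inj: "inj_on (\<lambda>i. red (e i)) S"
    proof (rule inj_onI)
      fix i j assume ij: "i \<in> S" "j \<in> S" "red (e i) = red (e j)"
      show "i = j"
      proof (rule ccontr)
        assume "i \<noteq> j"
        hence "i < j \<or> j < i" by auto
        thus False
        proof
          assume "i < j" thus False using dvdC2[OF ij(1,2)] pdvd[OF ij(3) ij(1,2)] nC2 dvd_trans by blast
        next
          assume "j < i"
          hence "d i j dvd C2" using dvdC2[OF ij(2,1)] dsym[of i j] by simp
          thus False using pdvd[OF ij(3) ij(1,2)] nC2 dvd_trans by blast
        qed
      qed
    qed
    define G where "G = [:rat_mod p (c 0) mod int p:] + (\<Sum>i\<in>S. monom (r i) (red (e i)))"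
    define F where "F = map_poly (rat_mod p) f"
    have F_eq: "F = [:rat_mod p (c 0):] + (\<Sum>i\<in>S. monom (r i) (e i))"
    proof (rule poly_eqI)
      fix n
      have cF: "coeff F n = rat_mod p (coeff f n)" unfolding F_def using rat_mod_0[OF p0] by (rule coeff_map_poly)
      have fe: "f = [:c 0:] + (\<Sum>i\<in>S. monom (c i) (e i))" unfolding f_def S_def ..
      show "coeff F n = coeff ([:rat_mod p (c 0):] + (\<Sum>i\<in>S. monom (r i) (e i))) n"
      proof (cases "n = 0")
        case True
        have eS: "\<forall>i\<in>S. 0 < e i" using e_pos unfolding S_def by simp
        show ?thesis unfolding cF unfolding fe True coeff_G_0[OF eS] ..
      next
        case False
        show ?thesis
        proof (cases "n \<in> e ` S")
          case True
          then obtain j where j: "j \<in> S" "n = e j" by auto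
          have ej: "0 < e j" using e_pos j unfolding S_def by simp
          have ei: "inj_on e S" using e_inj unfolding S_def .
          show ?thesis unfolding cF unfolding fe j(2) coeff_G_pos[OF fS ei j(1) ej] r_def ..
        next
          case nn: False
          show ?thesis unfolding cF unfolding fe coeff_G_out[OF nn False] rat_mod_0[OF p0] ..
        qed
      qed
    qed
    have congGF: "poly_cong_mod p (monom 1 p - monom 1 1) G F"
      unfolding G_def F_eq
      by (intro cong_add cong_const cong_sum, unfold red_def, rule cong_monom[OF p2])
         (use e_pos in \<open>auto simp: S_def Suc_le_eq\<close>)
    have cG0: "coeff G 0 = rat_mod p (c 0) mod int p" unfolding G_def by (rule coeff_G_0) (use red_pos in blast)
    have cGpos: "coeff G (red (e j)) = r j" if "j \<in> S" for j
      unfolding G_def using fS inj that red_pos by (rule coeff_G_pos)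
    have cGout: "coeff G n = 0" if "n \<notin> (\<lambda>i. red (e i)) ` S" "n \<noteq> 0" for n
      unfolding G_def using that by (rule coeff_G_out)
    have degG: "degree G < p"
    proof -
      have "degree G \<le> p - 1"
      proof (rule degree_le, intro allI impI)
        fix i assume "p - 1 < i"
        hence "i \<notin> (\<lambda>i. red (e i)) ` S" "i \<noteq> 0" using red_le by (auto simp: not_le[symmetric])
        thus "coeff G i = 0" by (rule cGout)
      qed
      thus ?thesis using p2 by simp
    qed
    have rngG: "\<forall>i. 0 \<le> coeff G i \<and> coeff G i < int p"
    proof
      fix n show "0 \<le> coeff G n \<and> coeff G n < int p"
      proof (cases "n = 0")
        case True thus ?thesis using cG0 p0 by simp
      next
        case False
        show ?thesis
        proof (cases "n \<in> (\<lambda>i. red (e i)) ` S")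
          case True then obtain j where "j \<in> S" "n = red (e j)" by auto
          thus ?thesis using cGpos rprop by auto
        next
          case nn: False thus ?thesis using cGout False p0 by simp
        qed
      qed
    qed
    have red_eq: "reduce_p p f = G"
      unfolding reduce_p_def F_def[symmetric]
    proof (rule the_equality)
      show "degree G < p \<and> (\<forall>i. 0 \<le> coeff G i \<and> coeff G i < int p) \<and> poly_cong_mod p (monom 1 p - monom 1 1) G F"
        using degG rngG congGF by blast
    next
      fix g assume "degree g < p \<and> (\<forall>i. 0 \<le> coeff g i \<and> coeff g i < int p) \<and> poly_cong_mod p (monom 1 p - monom 1 1) g F"
      thus "g = G" using cong_unique[OF p2 _ congGF _ degG _ rngG] by blast
    qed
    have "{i. 1 \<le> i \<and> coeff G i \<noteq> 0} = (\<lambda>i. red (e i)) ` S"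
    proof (intro equalityI subsetI)
      fix n assume "n \<in> {i. 1 \<le> i \<and> coeff G i \<noteq> 0}"
      thus "n \<in> (\<lambda>i. red (e i)) ` S" using cGout by fastforce
    next
      fix n assume "n \<in> (\<lambda>i. red (e i)) ` S"
      then obtain j where "j \<in> S" "n = red (e j)" by auto
      thus "n \<in> {i. 1 \<le> i \<and> coeff G i \<noteq> 0}" using cGpos rprop red_pos by (auto simp: Suc_le_eq)
    qed
    hence "tau G = card ((\<lambda>i. red (e i)) ` S)" unfolding tau_def by simp
    also have "\<dots> = t" using card_image[OF inj] cS by simp
    finally show ?thesis using red_eq by simp
  qed
  show ?thesis using C1pos C2pos logC1 logC2 main by blast
qed


end
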